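(* Let $\mathfrak{A}_5$ act on $\mathbb{P}^3=\mathbb{P}(\mathbb{U}_4)$ as described in the context. Then there are no $\mathfrak{A}_5$-invariant surfaces of degree at most three in $\mathbb{P}^3$.
   Context: Let $2.\mathfrak{A}_5$ be the binary icosahedral group (the non-split central extension of $\mathfrak{A}_5$ by $\mu_2$), and let $\mathbb{U}_4$ be its unique faithful irreducible four-dimensional complex representation. This induces a faithful action of $\mathfrak{A}_5$ on $\mathbb{P}^3=\mathbb{P}(\mathbb{U}_4)$. *)

theory Defs
  imports "HOL-Analysis.Analysis"
begin

text \<open>The binary icosahedral group 2.A5, realised as a subgroup of SL2(C) generated by
  Klein's classical generators S and T below (zeta5 a primitive 5th root of unity).
  Closing under multiplication suffices since the group is finite (order 120).\<close>

definition zeta5 :: complex where "zeta5 = cis (2 * pi / 5)"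

definition bi_S :: "complex^2^2" where
  "bi_S = vector [vector [zeta5 ^ 3, 0], vector [0, zeta5 ^ 2]]"

definition bi_T :: "complex^2^2" where
  "bi_T = (let r = complex_of_real (sqrt 5) in
     vector [vector [- (zeta5 - zeta5 ^ 4) / r, (zeta5 ^ 2 - zeta5 ^ 3) / r],
             vector [(zeta5 ^ 2 - zeta5 ^ 3) / r, (zeta5 - zeta5 ^ 4) / r]])"

inductive_set binary_icosahedral :: "(complex^2^2) set" where
  one: "mat 1 \<in> binary_icosahedral"
| mulS: "g \<in> binary_icosahedral \<Longrightarrow> g ** bi_S \<in> binary_icosahedral"
| mulT: "g \<in> binary_icosahedral \<Longrightarrow> g ** bi_T \<in> binary_icosahedral"

text \<open>The faithful irreducible 4-dimensional representation U4 = Sym^3 of the standard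
  2-dimensional representation: a vector x in C^4 is the binary cubic form
  x1 u^3 + x2 u^2 v + x3 u v^2 + x4 v^3, and g = [[a,b],[c,d]] acts by the substitution
  F(u,v) |-> F(a u + b v, c u + d v) (a right action; its image in GL4 is the same group).\<close>

definition sym3 :: "complex^2^2 \<Rightarrow> complex^4 \<Rightarrow> complex^4" where
  "sym3 g x = (let a = g$1$1; b = g$1$2; c = g$2$1; d = g$2$2;
                   x0 = x$1; x1 = x$2; x2 = x$3; x3 = x$4 in
     vector [ x0*a^3 + x1*a^2*c + x2*a*c^2 + x3*c^3,
              3*a^2*b*x0 + x1*(a^2*d + 2*a*b*c) + x2*(b*c^2 + 2*a*c*d) + 3*c^2*d*x3,
              3*a*b^2*x0 + x1*(b^2*c + 2*a*b*d) + x2*(a*d^2 + 2*b*c*d) + 3*c*d^2*x3,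
              b^3*x0 + b^2*d*x1 + b*d^2*x2 + d^3*x3 ])"

definition monomial_exps :: "nat \<Rightarrow> (4 \<Rightarrow> nat) set" where
  "monomial_exps d = {\<alpha>. (\<Sum>i\<in>UNIV. \<alpha> i) = d}"

definition homogeneous_poly :: "nat \<Rightarrow> (complex^4 \<Rightarrow> complex) \<Rightarrow> bool" where
  "homogeneous_poly d f \<longleftrightarrow>
     (\<exists>c :: (4 \<Rightarrow> nat) \<Rightarrow> complex.
        \<forall>x. f x = (\<Sum>\<alpha>\<in>monomial_exps d. c \<alpha> * (\<Prod>i\<in>UNIV. (x$i) ^ (\<alpha> i))))"

text \<open>A surface of degree d in P^3: the zero locus of a nonzero homogeneous polynomial of
  degree d >= 1 (represented by its affine cone in C^4).\<close>

definition surface_of_degree :: "nat \<Rightarrow> (complex^4) set \<Rightarrow> bool" where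
  "surface_of_degree d Z \<longleftrightarrow> 1 \<le> d \<and>
     (\<exists>f. homogeneous_poly d f \<and> f \<noteq> (\<lambda>_. 0) \<and> Z = {x. f x = 0})"

definition A5_invariant :: "(complex^4) set \<Rightarrow> bool" where
  "A5_invariant Z \<longleftrightarrow> (\<forall>g\<in>binary_icosahedral. sym3 g ` Z = Z)"

end

theory Submission imports Defs "HOL-Computational_Algebra.Fundamental_Theorem_Algebra" begin

lemma zeta5_pow5: "zeta5 ^ 5 = 1"
proof -
  have "zeta5 ^ 5 = cis (real 5 * (2*pi/5))" unfolding zeta5_def by (rule Complex.DeMoivre)
  thus ?thesis by simp
qed

lemma zeta5_nz: "zeta5 \<noteq> 0"
  unfolding zeta5_def by simp

lemma zeta5_ne1: "zeta5 \<noteq> 1"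
proof
  assume "zeta5 = 1"
  hence "Im zeta5 = 0" by simp
  moreover have "sin (2*pi/5) > 0" by (rule sin_gt_zero) auto
  ultimately show False unfolding zeta5_def by simp
qed

lemma Phi5: "1 + zeta5 + zeta5^2 + zeta5^3 + zeta5^4 = 0"
proof -
  have "(zeta5 - 1) * (1 + zeta5 + zeta5^2 + zeta5^3 + zeta5^4) = zeta5^5 - 1"
    by (simp add: algebra_simps power_Suc power_numeral_reduce eval_nat_numeral)
  also have "\<dots> = 0" by (simp add: zeta5_pow5)
  finally show ?thesis using zeta5_ne1 by simp
qed

lemma zeta5_4: "zeta5^4 = cis (- (2*pi/5))"
proof -
  have "zeta5^4 * zeta5 = 1" using zeta5_pow5 by (simp add: power_Suc2[symmetric] del: power_Suc2)
  hence "zeta5^4 = inverse zeta5" using zeta5_nz by (simp add: field_simps)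
  thus ?thesis unfolding zeta5_def by (simp add: cis_inverse)
qed

lemma sum_zeta: "zeta5 + zeta5^4 = complex_of_real (2 * cos (2*pi/5))"
  unfolding zeta5_4 by (simp add: zeta5_def complex_eq_iff cis.sel)

lemma sqrt5_zeta: "complex_of_real (sqrt 5) = 1 + 2*zeta5 + 2*zeta5^4"
proof -
  define x where "x = cos (2*pi/5)"
  have c: "zeta5 + zeta5^4 = complex_of_real (2*x)" using sum_zeta x_def by simp
  have "(zeta5 + zeta5^4)^2 + (zeta5 + zeta5^4) - 1 = 0"
    using Phi5 zeta5_pow5 by algebra
  hence "complex_of_real ((2*x)^2 + 2*x - 1) = 0" unfolding c by simp
  hence q: "(2*x)^2 + 2*x - 1 = 0" by (simp only: of_real_eq_0_iff)
  have xpos: "x > 0" unfolding x_def by (rule cos_gt_zero) (auto simp: field_simps)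
  have "(1 + 4*x)^2 = 5" using q by (simp add: power2_eq_square algebra_simps)
  hence "sqrt 5 = 1 + 4*x" using xpos by (metis abs_of_pos real_sqrt_abs add_pos_pos zero_less_one mult_pos_pos zero_less_numeral)
  hence "complex_of_real (sqrt 5) = 1 + 2 * complex_of_real (2*x)" by simp
  also have "\<dots> = 1 + 2*(zeta5 + zeta5^4)" using c by simp
  finally show ?thesis by (simp add: algebra_simps)
qed



definition M2 :: "complex \<Rightarrow> complex \<Rightarrow> complex \<Rightarrow> complex \<Rightarrow> complex^2^2" where
  "M2 a b c d = vector [vector [a,b], vector [c,d]]"

lemma M2_nth [simp]: "M2 a b c d $ 1 $ 1 = a" "M2 a b c d $ 1 $ 2 = b" "M2 a b c d $ 2 $ 1 = c" "M2 a b c d $ 2 $ 2 = d"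
  by (simp_all add: M2_def)

lemma M2_eq: "(A::complex^2^2) = M2 (A$1$1) (A$1$2) (A$2$1) (A$2$2)"
  by (simp add: vec_eq_iff forall_2)

lemma arg_cong4: "a = a' \<Longrightarrow> b = b' \<Longrightarrow> c = c' \<Longrightarrow> d = d' \<Longrightarrow> f a b c d = f a' b' c' d'" by simp

lemma M2_mult: "M2 a b c d ** M2 a' b' c' d' = M2 (a*a'+b*c') (a*b'+b*d') (c*a'+d*c') (c*b'+d*d')"
  by (simp add: vec_eq_iff forall_2 matrix_matrix_mult_def sum_2)

lemma mat1_M2: "(mat 1 :: complex^2^2) = M2 1 0 0 1"
  by (simp add: vec_eq_iff forall_2 mat_def)

lemma S_M2: "bi_S = M2 (zeta5^3) 0 0 (zeta5^2)"
  by (simp add: bi_S_def M2_def)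

definition "rr = complex_of_real (sqrt 5)"
definition "qq = (zeta5^2 - zeta5^3) / rr"
definition "ph = (1 + rr) / 2"

lemma rr_zeta: "rr = 1 + 2*zeta5 + 2*zeta5^4" using sqrt5_zeta rr_def by simp
lemma rr_nz: "rr \<noteq> 0" by (simp add: rr_def)
lemma ph_sq: "ph^2 = ph + 1"
proof -
  have "rr^2 = 5" unfolding rr_def by (simp flip: of_real_power)
  thus ?thesis unfolding ph_def by (simp add: power2_eq_square field_simps)
qed

lemma A_eq: "zeta5 - zeta5^4 = ph * (zeta5^2 - zeta5^3)"
proof -
  have "ph = 1 + zeta5 + zeta5^4" unfolding ph_def rr_zeta by simp
  thus ?thesis using zeta5_pow5 by algebra
qed

lemma T_M2: "bi_T = M2 (-(qq*ph)) qq qq (qq*ph)"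
  unfolding bi_T_def Let_def rr_def[symmetric] A_eq M2_def qq_def by (simp add: mult.commute)

definition "PP = mat 1 ** bi_T ** bi_S ** bi_S ** bi_S ** bi_T ** bi_S ** bi_S ** bi_T"

lemma PP_mem: "PP \<in> binary_icosahedral"
  unfolding PP_def by (intro binary_icosahedral.intros)

lemma PP_val: "PP = M2 0 (zeta5^4) (-zeta5) 0"
proof -
  have r: "rr = 1 + 2*zeta5 + 2*zeta5^4" by (rule rr_zeta)
  have q: "qq * rr = zeta5^2 - zeta5^3" unfolding qq_def using rr_nz by simp
  have p: "2*ph = 1 + rr" unfolding ph_def by simp
  have z5: "zeta5^5 = 1" by (rule zeta5_pow5)
  have F: "1 + zeta5 + zeta5^2 + zeta5^3 + zeta5^4 = 0" by (rule Phi5)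
  show ?thesis unfolding PP_def mat1_M2 S_M2 T_M2 M2_mult
    apply (rule arg_cong4[where f=M2])
    using r q p z5 F by algebra+
qed


lemma vector_4 [simp]:
 "(vector [x,y,z,w] ::('a::zero)^4)$1 = x"
 "(vector [x,y,z,w] ::('a::zero)^4)$2 = y"
 "(vector [x,y,z,w] ::('a::zero)^4)$3 = z"
 "(vector [x,y,z,w] ::('a::zero)^4)$4 = w"
  unfolding vector_def by simp_all

lemma vec4_eta: "vector [x$1, x$2, x$3, x$4] = (x::'a::zero^4)"
  by (simp add: vec_eq_iff forall_4)

lemma sym3_M2: "sym3 (M2 a b c d) x = vector [ x$1*a^3 + x$2*a^2*c + x$3*a*c^2 + x$4*c^3,
              3*a^2*b*x$1 + x$2*(a^2*d + 2*a*b*c) + x$3*(b*c^2 + 2*a*c*d) + 3*c^2*d*x$4,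
              3*a*b^2*x$1 + x$2*(b^2*c + 2*a*b*d) + x$3*(a*d^2 + 2*b*c*d) + 3*c*d^2*x$4,
              b^3*x$1 + b^2*d*x$2 + b*d^2*x$3 + d^3*x$4 ]"
  by (simp add: sym3_def Let_def)

lemma zred: "zeta5^5 = 1" "zeta5^6 = zeta5" "zeta5^7 = zeta5^2" "zeta5^8 = zeta5^3" "zeta5^9 = zeta5^4"
  "zeta5^10 = 1" "zeta5^12 = zeta5^2" "zeta5^16 = zeta5"
proof -
  have p: "zeta5^(5+k) = zeta5^k" for k by (simp add: power_add zeta5_pow5)
  show "zeta5^5 = 1" by (rule zeta5_pow5)
  show "zeta5^6 = zeta5" using p[of 1] by simp
  show "zeta5^7 = zeta5^2" using p[of 2] by simp
  show "zeta5^8 = zeta5^3" using p[of 3] by simp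
  show "zeta5^9 = zeta5^4" using p[of 4] by simp
  show "zeta5^10 = 1" using p[of 5] zeta5_pow5 by simp
  show "zeta5^12 = zeta5^2" using p[of 7] p[of 2] by simp
  show "zeta5^16 = zeta5" using p[of 11] p[of 6] p[of 1] by simp
qed

lemma vec4_cong: "a = a' \<Longrightarrow> b = b' \<Longrightarrow> c = c' \<Longrightarrow> d = d' \<Longrightarrow> vector [a,b,c,d] = vector [a',b',c',d']"
  by simp

lemma vand5:
  assumes "\<forall>n<5. g0 + zeta5^n*g1 + (zeta5^n)^2*g2 + (zeta5^n)^3*g3 + (zeta5^n)^4*g4 = 0"
  shows "g0 = 0 \<and> g1 = 0 \<and> g2 = 0 \<and> g3 = 0 \<and> g4 = (0::complex)"
proof -
  have e0: "g0 + g1 + g2 + g3 + g4 = 0" using assms[rule_format, of 0] by simp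
  have e1: "g0 + zeta5*g1 + zeta5^2*g2 + zeta5^3*g3 + zeta5^4*g4 = 0" using assms[rule_format, of 1] by simp
  have e2: "g0 + zeta5^2*g1 + zeta5^4*g2 + zeta5*g3 + zeta5^3*g4 = 0" using assms[rule_format, of 2] by (simp add: zred flip: power_mult)
  have e3: "g0 + zeta5^3*g1 + zeta5*g2 + zeta5^4*g3 + zeta5^2*g4 = 0" using assms[rule_format, of 3] by (simp add: zred flip: power_mult)
  have e4: "g0 + zeta5^4*g1 + zeta5^3*g2 + zeta5^2*g3 + zeta5*g4 = 0" using assms[rule_format, of 4] by (simp add: zred flip: power_mult)
  have F: "1 + zeta5 + zeta5^2 + zeta5^3 + zeta5^4 = 0" by (rule Phi5)
  show ?thesis using e0 e1 e2 e3 e4 zred F by algebra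
qed
lemma z123: "zeta5 * zeta5^2 = zeta5^3" by (simp add: power3_eq_cube power2_eq_square)

lemma S_act: "sym3 bi_S x = vector [zeta5^4 * x$1, zeta5^3 * x$2, zeta5^2 * x$3, zeta5 * x$4]"
proof -
  show ?thesis unfolding S_M2 sym3_M2
    by (rule vec4_cong) (simp_all add: zred z123 mult.commute flip: power_mult power_add)
qed

lemma factW:
  fixes C :: "complex \<Rightarrow> complex \<Rightarrow> complex \<Rightarrow> complex \<Rightarrow> nat \<Rightarrow> complex"
  assumes Zdef: "\<And>x. x \<in> Z \<longleftrightarrow> F (x$1) (x$2) (x$3) (x$4) = 0"
  and invS: "\<And>x. x \<in> Z \<Longrightarrow> sym3 bi_S x \<in> Z"
  and FC: "\<And>z y1 y2 y3 y4. z^5 = 1 \<Longrightarrow> F (z^4*y1) (z^3*y2) (z^2*y3) (z*y4) =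
     C y1 y2 y3 y4 0 + z * C y1 y2 y3 y4 1 + z^2 * C y1 y2 y3 y4 2 + z^3 * C y1 y2 y3 y4 3 + z^4 * C y1 y2 y3 y4 4"
  and y: "y \<in> Z"
  shows "C (y$1) (y$2) (y$3) (y$4) 0 = 0 \<and> C (y$1) (y$2) (y$3) (y$4) 1 = 0 \<and> C (y$1) (y$2) (y$3) (y$4) 2 = 0 \<and>
         C (y$1) (y$2) (y$3) (y$4) 3 = 0 \<and> C (y$1) (y$2) (y$3) (y$4) 4 = 0"
proof -
  have orb: "vector [(zeta5^n)^4*y$1, (zeta5^n)^3*y$2, (zeta5^n)^2*y$3, zeta5^n*y$4] \<in> Z" for n
  proof (induction n)
    case 0 thus ?case using y by (simp add: vec4_eta)
  next
    case (Suc n)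
    from invS[OF Suc] show ?case unfolding S_act by (simp add: algebra_simps power_mult_distrib)
  qed
  have "\<forall>n<5. C (y$1) (y$2) (y$3) (y$4) 0 + zeta5^n * C (y$1) (y$2) (y$3) (y$4) 1 + (zeta5^n)^2 * C (y$1) (y$2) (y$3) (y$4) 2
      + (zeta5^n)^3 * C (y$1) (y$2) (y$3) (y$4) 3 + (zeta5^n)^4 * C (y$1) (y$2) (y$3) (y$4) 4 = 0"
  proof (intro allI impI)
    fix n :: nat
    have z: "(zeta5^n)^5 = 1" by (simp add: zeta5_pow5 flip: power_mult power_mult_distrib) (metis power_mult mult.commute zeta5_pow5 power_one)
    from orb[of n] have "F ((zeta5^n)^4*y$1) ((zeta5^n)^3*y$2) ((zeta5^n)^2*y$3) (zeta5^n*y$4) = 0" by (simp add: Zdef)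
    thus "C (y$1) (y$2) (y$3) (y$4) 0 + zeta5^n * C (y$1) (y$2) (y$3) (y$4) 1 + (zeta5^n)^2 * C (y$1) (y$2) (y$3) (y$4) 2
      + (zeta5^n)^3 * C (y$1) (y$2) (y$3) (y$4) 3 + (zeta5^n)^4 * C (y$1) (y$2) (y$3) (y$4) 4 = 0"
      using FC[OF z] by simp
  qed
  thus ?thesis by (rule vand5)
qed

lemma root3:
  fixes a0 a1 a2 a3 :: complex
  assumes "a3 \<noteq> 0"
  shows "\<exists>t. a0 + a1*t + a2*t^2 + a3*t^3 = 0"
proof -
  let ?p = "[:a0, a1, a2, a3:]"
  have "degree ?p = 3" using assms by simp
  hence "\<not> constant (poly ?p)" by (simp add: constant_degree)
  then obtain t where "poly ?p t = 0" using fundamental_theorem_of_algebra by blast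
  thus ?thesis by (auto simp: algebra_simps power2_eq_square power3_eq_cube)
qed

lemma root2:
  fixes a0 a1 a2 :: complex
  assumes "a2 \<noteq> 0"
  shows "\<exists>t. a0 + a1*t + a2*t^2 = 0"
proof -
  let ?p = "[:a0, a1, a2:]"
  have "degree ?p = 2" using assms by simp
  hence "\<not> constant (poly ?p)" by (simp add: constant_degree)
  then obtain t where "poly ?p t = 0" using fundamental_theorem_of_algebra by blast
  thus ?thesis by (auto simp: algebra_simps power2_eq_square)
qed

lemma root1:
  fixes a0 a1 :: complex
  assumes "a1 \<noteq> 0"
  shows "\<exists>t. a0 + a1*t = 0"
  using assms by (intro exI[of _ "-a0/a1"]) simp

lemma qq_nz: "qq \<noteq> 0"
proof -
  have "zeta5^2 - zeta5^3 = zeta5^2 * (1 - zeta5)" by (simp add: algebra_simps power_numeral_reduce)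
  moreover have "zeta5^2 * (1 - zeta5) \<noteq> 0" using zeta5_nz zeta5_ne1 by simp
  ultimately show ?thesis unfolding qq_def using rr_nz by simp
qed

lemma PP_act:
  "sym3 PP (vector [a,0,0,0]) = vector [0,0,0,(zeta5^4)^3*a]"
  "sym3 PP (vector [0,0,0,a]) = vector [(-zeta5)^3*a,0,0,0]"
  "sym3 PP (vector [0,a,0,0]) = vector [0,0,(zeta5^4)^2*(-zeta5)*a,0]"
  "sym3 PP (vector [0,0,a,0]) = vector [0,zeta5^4*(-zeta5)^2*a,0,0]"
  unfolding PP_val sym3_M2 by (simp_all add: algebra_simps)

lemma T_act:
  "sym3 bi_T (vector [1,0,0,0]) = vector [qq^3*(-(ph^3)), qq^3*(3*ph^2), qq^3*(-(3*ph)), qq^3*1]"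
  "sym3 bi_T (vector [0,1,0,0]) = vector [qq^3*(ph^2), qq^3*(ph^3-2*ph), qq^3*(1-2*ph^2), qq^3*ph]"
  "sym3 bi_T (vector [0,0,1,0]) = vector [qq^3*(-ph), qq^3*(1-2*ph^2), qq^3*(2*ph-ph^3), qq^3*(ph^2)]"
  "sym3 bi_T (vector [0,0,0,1]) = vector [qq^3*1, qq^3*(3*ph), qq^3*(3*ph^2), qq^3*(ph^3)]"
  unfolding T_M2 sym3_M2 by (rule vec4_cong; simp; algebra)+


lemma prod_4: "prod f (UNIV::4 set) = f 1 * f 2 * f 3 * f 4"
  unfolding UNIV_4 by (simp add: ac_simps)

lemma S_mem: "bi_S \<in> binary_icosahedral"
  using binary_icosahedral.mulS[OF binary_icosahedral.one] by (simp add: matrix_mul_lid)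

lemma T_mem: "bi_T \<in> binary_icosahedral"
  using binary_icosahedral.mulT[OF binary_icosahedral.one] by (simp add: matrix_mul_lid)

definition E4 :: "nat \<times> nat \<times> nat \<times> nat \<Rightarrow> 4 \<Rightarrow> nat" where
  "E4 t i = (case t of (a,b,c,e) \<Rightarrow> if i = 1 then a else if i = 2 then b else if i = 3 then c else e)"

lemma E4_simps [simp]: "E4 (a,b,c,e) 1 = a" "E4 (a,b,c,e) 2 = b" "E4 (a,b,c,e) 3 = c" "E4 (a,b,c,e) 4 = e"
  by (simp_all add: E4_def)

lemma E4_eta: "E4 (\<alpha> 1, \<alpha> 2, \<alpha> 3, \<alpha> 4) = \<alpha>"
proof
  fix i :: 4 show "E4 (\<alpha> 1, \<alpha> 2, \<alpha> 3, \<alpha> 4) i = \<alpha> i"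
    using exhaust_4[of i] by auto
qed

lemma mono_key: "\<alpha> \<in> monomial_exps d \<Longrightarrow> E4 (\<alpha> 1, \<alpha> 2, \<alpha> 3, d - \<alpha> 1 - \<alpha> 2 - \<alpha> 3) = \<alpha>"
proof -
  assume "\<alpha> \<in> monomial_exps d"
  hence s: "\<alpha> 1 + \<alpha> 2 + \<alpha> 3 + \<alpha> 4 = d" by (simp add: monomial_exps_def sum_4)
  hence "d - \<alpha> 1 - \<alpha> 2 - \<alpha> 3 = \<alpha> 4" by arith
  thus ?thesis using E4_eta[of \<alpha>] by simp
qed

lemma mono_sum:
  "sum g (monomial_exps d) = (\<Sum>(a,b,c)\<in>{(a,b,c). a+b+c \<le> d}. g (E4 (a,b,c,d-a-b-c)))"
proof (rule sum.reindex_bij_witness[where i="\<lambda>(a,b,c). E4 (a,b,c,d-a-b-c)" and j="\<lambda>\<alpha>. (\<alpha> 1, \<alpha> 2, \<alpha> 3)"])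
  fix \<alpha> assume a: "\<alpha> \<in> monomial_exps d"
  hence s: "\<alpha> 1 + \<alpha> 2 + \<alpha> 3 + \<alpha> 4 = d" by (simp add: monomial_exps_def sum_4)
  show "(\<lambda>(a,b,c). E4 (a,b,c,d-a-b-c)) (\<alpha> 1, \<alpha> 2, \<alpha> 3) = \<alpha>"
    using mono_key[OF a] by simp
  show "(\<alpha> 1, \<alpha> 2, \<alpha> 3) \<in> {(a,b,c). a+b+c \<le> d}" using s by simp
  show "(case (\<alpha> 1, \<alpha> 2, \<alpha> 3) of (a, b, c) \<Rightarrow> g (E4 (a, b, c, d - a - b - c))) = g \<alpha>"
    using mono_key[OF a] by simp
next
  fix t assume "t \<in> {(a,b,c). a+b+c \<le> (d::nat)}"
  then obtain a b c where t: "t = (a,b,c)" "a+b+c \<le> d" by auto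
  thus "(\<lambda>\<alpha>. (\<alpha> 1, \<alpha> 2, \<alpha> 3)) ((\<lambda>(a,b,c). E4 (a,b,c,d-a-b-c)) t) = t" by simp
  show "(\<lambda>(a,b,c). E4 (a,b,c,d-a-b-c)) t \<in> monomial_exps d"
    using t by (simp add: monomial_exps_def sum_4)
qed

lemma tri_set: "{(a,b,c). a+b+c \<le> (d::nat)} = Sigma {..d} (\<lambda>a. Sigma {..d-a} (\<lambda>b. {..d-a-b}))"
  by auto

lemma mono_sum2:
  "sum g (monomial_exps d) = (\<Sum>a\<le>d. \<Sum>b\<le>d-a. \<Sum>c\<le>d-a-b. g (E4 (a,b,c,d-a-b-c)))"
proof -
  have "sum g (monomial_exps d) = (\<Sum>(a,b,c)\<in>Sigma {..d} (\<lambda>a. Sigma {..d-a} (\<lambda>b. {..d-a-b})). g (E4 (a,b,c,d-a-b-c)))"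
    using mono_sum[of g d] tri_set[of d] by simp
  also have "\<dots> = (\<Sum>a\<le>d. \<Sum>(b,c)\<in>Sigma {..d-a} (\<lambda>b. {..d-a-b}). g (E4 (a,b,c,d-a-b-c)))"
    by (rule sum.Sigma[symmetric]) auto
  also have "\<dots> = (\<Sum>a\<le>d. \<Sum>b\<le>d-a. \<Sum>c\<le>d-a-b. g (E4 (a,b,c,d-a-b-c)))"
    by (rule sum.cong[OF refl], rule sum.Sigma[symmetric]) auto
  finally show ?thesis .
qed


definition F1 :: "(nat \<Rightarrow> nat \<Rightarrow> nat \<Rightarrow> nat \<Rightarrow> complex) \<Rightarrow> complex \<Rightarrow> complex \<Rightarrow> complex \<Rightarrow> complex \<Rightarrow> complex" where
  "F1 k y1 y2 y3 y4 = k 1 0 0 0 * y1 + k 0 1 0 0 * y2 + k 0 0 1 0 * y3 + k 0 0 0 1 * y4"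

definition C1 :: "(nat \<Rightarrow> nat \<Rightarrow> nat \<Rightarrow> nat \<Rightarrow> complex) \<Rightarrow> complex \<Rightarrow> complex \<Rightarrow> complex \<Rightarrow> complex \<Rightarrow> nat \<Rightarrow> complex" where
  "C1 k y1 y2 y3 y4 w = (if w = 0 then 0 else (if w = 1 then k 0 0 0 1 * y4 else (if w = 2 then k 0 0 1 0 * y3 else (if w = 3 then k 0 1 0 0 * y2 else (k 1 0 0 0 * y1)))))"

lemma F1_expand: "(\<Sum>\<alpha>\<in>monomial_exps 1. c \<alpha> * (\<Prod>i\<in>UNIV. x$i ^ \<alpha> i)) = F1 (\<lambda>a b cc e. c (E4 (a,b,cc,e))) (x$1) (x$2) (x$3) (x$4)"
  unfolding mono_sum2 F1_def prod_4 by (simp add: eval_nat_numeral)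

lemma F1_FC: "z^5 = 1 \<Longrightarrow> F1 k (z^4*y1) (z^3*y2) (z^2*y3) (z*y4) =
     C1 k y1 y2 y3 y4 0 + z * C1 k y1 y2 y3 y4 1 + z^2 * C1 k y1 y2 y3 y4 2 + z^3 * C1 k y1 y2 y3 y4 3 + z^4 * C1 k y1 y2 y3 y4 4"
  unfolding F1_def C1_def by (simp; algebra?)

lemma C1_hom: "C1 k (s*y1) (s*y2) (s*y3) (s*y4) w = s^1 * C1 k y1 y2 y3 y4 w"
  unfolding C1_def by (simp add: algebra_simps power_mult_distrib power2_eq_square power3_eq_cube)

lemma main1:
  assumes Zdef: "\<And>x. x \<in> Z \<longleftrightarrow> F1 k (x$1) (x$2) (x$3) (x$4) = 0"
  and inv: "\<And>g x. g \<in> binary_icosahedral \<Longrightarrow> x \<in> Z \<Longrightarrow> sym3 g x \<in> Z"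
  shows "F1 k y1 y2 y3 y4 = 0"
proof -
  have invS: "\<And>x. x \<in> Z \<Longrightarrow> sym3 bi_S x \<in> Z" using inv S_mem by blast
  have W: "\<And>y. y \<in> Z \<Longrightarrow> \<forall>w<5. C1 k (y$1) (y$2) (y$3) (y$4) w = 0"
  proof -
    fix y assume "y \<in> Z"
    from factW[where C="C1 k", OF Zdef invS F1_FC this]
    show "\<forall>w<5. C1 k (y$1) (y$2) (y$3) (y$4) w = 0" by (auto simp: less_Suc_eq numeral_eq_Suc)
  qed
  have p14: "k 1 0 0 0 = 0 \<or> k 0 0 0 1 = 0"
  proof (rule ccontr)
    assume "\<not> (k 1 0 0 0 = 0 \<or> k 0 0 0 1 = 0)"
    hence a: "k 1 0 0 0 \<noteq> 0" "k 0 0 0 1 \<noteq> 0" by auto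
    obtain t where t: "k 1 0 0 0 + k 0 0 0 1*t = 0" using root1[OF a(2)] by blast
    have "vector [1,0,0,t] \<in> Z" using t by (simp add: Zdef F1_def algebra_simps)
    from W[OF this] have "C1 k 1 0 0 t 4 = 0" by simp
    hence "k 1 0 0 0 = 0" by (simp add: C1_def)
    with a show False by simp
  qed
  have p23: "k 0 1 0 0 = 0 \<or> k 0 0 1 0 = 0"
  proof (rule ccontr)
    assume "\<not> (k 0 1 0 0 = 0 \<or> k 0 0 1 0 = 0)"
    hence a: "k 0 1 0 0 \<noteq> 0" "k 0 0 1 0 \<noteq> 0" by auto
    obtain t where t: "k 0 1 0 0 + k 0 0 1 0*t = 0" using root1[OF a(2)] by blast
    have "vector [0,1,t,0] \<in> Z" using t by (simp add: Zdef F1_def algebra_simps)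
    from W[OF this] have "C1 k 0 1 t 0 3 = 0" by simp
    hence "k 0 1 0 0 = 0" by (simp add: C1_def)
    with a show False by simp
  qed
  have u14: "k 1 0 0 0 = 0 \<longleftrightarrow> k 0 0 0 1 = 0"
  proof
    assume "k 1 0 0 0 = 0"
    hence "vector [1,0,0,0] \<in> Z" by (simp add: Zdef F1_def)
    hence "sym3 PP (vector [1,0,0,0]) \<in> Z" using inv PP_mem by blast
    hence "vector [0,0,0,(zeta5^4)^3*1] \<in> Z" by (simp only: PP_act)
    thus "k 0 0 0 1 = 0" using zeta5_nz by (simp add: Zdef F1_def)
  next
    assume "k 0 0 0 1 = 0"
    hence "vector [0,0,0,1] \<in> Z" by (simp add: Zdef F1_def)
    hence "sym3 PP (vector [0,0,0,1]) \<in> Z" using inv PP_mem by blast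
    hence "vector [(-zeta5)^3*1,0,0,0] \<in> Z" by (simp only: PP_act)
    thus "k 1 0 0 0 = 0" using zeta5_nz by (simp add: Zdef F1_def)
  qed
  have u23: "k 0 1 0 0 = 0 \<longleftrightarrow> k 0 0 1 0 = 0"
  proof
    assume "k 0 1 0 0 = 0"
    hence "vector [0,1,0,0] \<in> Z" by (simp add: Zdef F1_def)
    hence "sym3 PP (vector [0,1,0,0]) \<in> Z" using inv PP_mem by blast
    hence "vector [0,0,(zeta5^4)^2*(-zeta5)*1,0] \<in> Z" by (simp only: PP_act)
    thus "k 0 0 1 0 = 0" using zeta5_nz by (simp add: Zdef F1_def)
  next
    assume "k 0 0 1 0 = 0"
    hence "vector [0,0,1,0] \<in> Z" by (simp add: Zdef F1_def)
    hence "sym3 PP (vector [0,0,1,0]) \<in> Z" using inv PP_mem by blast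
    hence "vector [0,zeta5^4*(-zeta5)^2*1,0,0] \<in> Z" by (simp only: PP_act)
    thus "k 0 1 0 0 = 0" using zeta5_nz by (simp add: Zdef F1_def)
  qed
  have cc1: "k 1 0 0 0 = 0" using p14 u14 by blast
  have cc2: "k 0 1 0 0 = 0" using p23 u23 by blast
  have cc3: "k 0 0 1 0 = 0" using p23 u23 by blast
  have cc4: "k 0 0 0 1 = 0" using p14 u14 by blast
  note cubes = cc1 cc2 cc3 cc4
  show ?thesis unfolding F1_def using cubes  by simp
qed

definition F2 :: "(nat \<Rightarrow> nat \<Rightarrow> nat \<Rightarrow> nat \<Rightarrow> complex) \<Rightarrow> complex \<Rightarrow> complex \<Rightarrow> complex \<Rightarrow> complex \<Rightarrow> complex" where
  "F2 k y1 y2 y3 y4 = k 2 0 0 0 * y1^2 + k 1 1 0 0 * y1*y2 + k 1 0 1 0 * y1*y3 + k 1 0 0 1 * y1*y4 + k 0 2 0 0 * y2^2 + k 0 1 1 0 * y2*y3 + k 0 1 0 1 * y2*y4 + k 0 0 2 0 * y3^2 + k 0 0 1 1 * y3*y4 + k 0 0 0 2 * y4^2"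

definition C2 :: "(nat \<Rightarrow> nat \<Rightarrow> nat \<Rightarrow> nat \<Rightarrow> complex) \<Rightarrow> complex \<Rightarrow> complex \<Rightarrow> complex \<Rightarrow> complex \<Rightarrow> nat \<Rightarrow> complex" where
  "C2 k y1 y2 y3 y4 w = (if w = 0 then k 1 0 0 1 * y1*y4 + k 0 1 1 0 * y2*y3 else (if w = 1 then k 1 0 1 0 * y1*y3 + k 0 2 0 0 * y2^2 else (if w = 2 then k 1 1 0 0 * y1*y2 + k 0 0 0 2 * y4^2 else (if w = 3 then k 2 0 0 0 * y1^2 + k 0 0 1 1 * y3*y4 else (k 0 1 0 1 * y2*y4 + k 0 0 2 0 * y3^2)))))"

lemma F2_expand: "(\<Sum>\<alpha>\<in>monomial_exps 2. c \<alpha> * (\<Prod>i\<in>UNIV. x$i ^ \<alpha> i)) = F2 (\<lambda>a b cc e. c (E4 (a,b,cc,e))) (x$1) (x$2) (x$3) (x$4)"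
  unfolding mono_sum2 F2_def prod_4 by (simp add: eval_nat_numeral)

lemma F2_FC: "z^5 = 1 \<Longrightarrow> F2 k (z^4*y1) (z^3*y2) (z^2*y3) (z*y4) =
     C2 k y1 y2 y3 y4 0 + z * C2 k y1 y2 y3 y4 1 + z^2 * C2 k y1 y2 y3 y4 2 + z^3 * C2 k y1 y2 y3 y4 3 + z^4 * C2 k y1 y2 y3 y4 4"
  unfolding F2_def C2_def by (simp; algebra?)

lemma C2_hom: "C2 k (s*y1) (s*y2) (s*y3) (s*y4) w = s^2 * C2 k y1 y2 y3 y4 w"
  unfolding C2_def by (simp add: algebra_simps power_mult_distrib power2_eq_square power3_eq_cube)

lemma cl2_1001: "ph^2 = ph + 1 \<Longrightarrow> C2 k (-(ph^3)) (3*ph^2) (-(3*ph)) 1 0 = 0 \<Longrightarrow> C2 k (ph^2) (ph^3-2*ph) (1-2*ph^2) ph 0 = 0 \<Longrightarrow> C2 k (-ph) (1-2*ph^2) (2*ph-ph^3) (ph^2) 0 = 0 \<Longrightarrow> C2 k 1 (3*ph) (3*ph^2) (ph^3) 0 = 0 \<Longrightarrow> k 1 0 0 1 = 0"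
  unfolding C2_def by simp algebra

lemma cl2_0110: "ph^2 = ph + 1 \<Longrightarrow> C2 k (-(ph^3)) (3*ph^2) (-(3*ph)) 1 0 = 0 \<Longrightarrow> C2 k (ph^2) (ph^3-2*ph) (1-2*ph^2) ph 0 = 0 \<Longrightarrow> C2 k (-ph) (1-2*ph^2) (2*ph-ph^3) (ph^2) 0 = 0 \<Longrightarrow> C2 k 1 (3*ph) (3*ph^2) (ph^3) 0 = 0 \<Longrightarrow> k 0 1 1 0 = 0"
  unfolding C2_def by simp algebra

lemma cl2_1010: "ph^2 = ph + 1 \<Longrightarrow> C2 k (-(ph^3)) (3*ph^2) (-(3*ph)) 1 1 = 0 \<Longrightarrow> C2 k (ph^2) (ph^3-2*ph) (1-2*ph^2) ph 1 = 0 \<Longrightarrow> C2 k (-ph) (1-2*ph^2) (2*ph-ph^3) (ph^2) 1 = 0 \<Longrightarrow> C2 k 1 (3*ph) (3*ph^2) (ph^3) 1 = 0 \<Longrightarrow> k 0 2 0 0 = 0 \<Longrightarrow> k 1 0 1 0 = 0"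
  unfolding C2_def by simp algebra

lemma cl2_1100: "ph^2 = ph + 1 \<Longrightarrow> C2 k (-(ph^3)) (3*ph^2) (-(3*ph)) 1 2 = 0 \<Longrightarrow> C2 k (ph^2) (ph^3-2*ph) (1-2*ph^2) ph 2 = 0 \<Longrightarrow> C2 k (-ph) (1-2*ph^2) (2*ph-ph^3) (ph^2) 2 = 0 \<Longrightarrow> C2 k 1 (3*ph) (3*ph^2) (ph^3) 2 = 0 \<Longrightarrow> k 0 0 0 2 = 0 \<Longrightarrow> k 1 1 0 0 = 0"
  unfolding C2_def by simp algebra

lemma cl2_0011: "ph^2 = ph + 1 \<Longrightarrow> C2 k (-(ph^3)) (3*ph^2) (-(3*ph)) 1 3 = 0 \<Longrightarrow> C2 k (ph^2) (ph^3-2*ph) (1-2*ph^2) ph 3 = 0 \<Longrightarrow> C2 k (-ph) (1-2*ph^2) (2*ph-ph^3) (ph^2) 3 = 0 \<Longrightarrow> C2 k 1 (3*ph) (3*ph^2) (ph^3) 3 = 0 \<Longrightarrow> k 2 0 0 0 = 0 \<Longrightarrow> k 0 0 1 1 = 0"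
  unfolding C2_def by simp algebra

lemma cl2_0101: "ph^2 = ph + 1 \<Longrightarrow> C2 k (-(ph^3)) (3*ph^2) (-(3*ph)) 1 4 = 0 \<Longrightarrow> C2 k (ph^2) (ph^3-2*ph) (1-2*ph^2) ph 4 = 0 \<Longrightarrow> C2 k (-ph) (1-2*ph^2) (2*ph-ph^3) (ph^2) 4 = 0 \<Longrightarrow> C2 k 1 (3*ph) (3*ph^2) (ph^3) 4 = 0 \<Longrightarrow> k 0 0 2 0 = 0 \<Longrightarrow> k 0 1 0 1 = 0"
  unfolding C2_def by simp algebra

lemma main2:
  assumes Zdef: "\<And>x. x \<in> Z \<longleftrightarrow> F2 k (x$1) (x$2) (x$3) (x$4) = 0"
  and inv: "\<And>g x. g \<in> binary_icosahedral \<Longrightarrow> x \<in> Z \<Longrightarrow> sym3 g x \<in> Z"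
  shows "F2 k y1 y2 y3 y4 = 0"
proof -
  have invS: "\<And>x. x \<in> Z \<Longrightarrow> sym3 bi_S x \<in> Z" using inv S_mem by blast
  have W: "\<And>y. y \<in> Z \<Longrightarrow> \<forall>w<5. C2 k (y$1) (y$2) (y$3) (y$4) w = 0"
  proof -
    fix y assume "y \<in> Z"
    from factW[where C="C2 k", OF Zdef invS F2_FC this]
    show "\<forall>w<5. C2 k (y$1) (y$2) (y$3) (y$4) w = 0" by (auto simp: less_Suc_eq numeral_eq_Suc)
  qed
  have p14: "k 2 0 0 0 = 0 \<or> k 0 0 0 2 = 0"
  proof (rule ccontr)
    assume "\<not> (k 2 0 0 0 = 0 \<or> k 0 0 0 2 = 0)"
    hence a: "k 2 0 0 0 \<noteq> 0" "k 0 0 0 2 \<noteq> 0" by auto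
    obtain t where t: "k 2 0 0 0 + k 1 0 0 1*t + k 0 0 0 2*t^2 = 0" using root2[OF a(2)] by blast
    have "vector [1,0,0,t] \<in> Z" using t by (simp add: Zdef F2_def algebra_simps)
    from W[OF this] have "C2 k 1 0 0 t 3 = 0" by simp
    hence "k 2 0 0 0 = 0" by (simp add: C2_def)
    with a show False by simp
  qed
  have p23: "k 0 2 0 0 = 0 \<or> k 0 0 2 0 = 0"
  proof (rule ccontr)
    assume "\<not> (k 0 2 0 0 = 0 \<or> k 0 0 2 0 = 0)"
    hence a: "k 0 2 0 0 \<noteq> 0" "k 0 0 2 0 \<noteq> 0" by auto
    obtain t where t: "k 0 2 0 0 + k 0 1 1 0*t + k 0 0 2 0*t^2 = 0" using root2[OF a(2)] by blast
    have "vector [0,1,t,0] \<in> Z" using t by (simp add: Zdef F2_def algebra_simps)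
    from W[OF this] have "C2 k 0 1 t 0 1 = 0" by simp
    hence "k 0 2 0 0 = 0" by (simp add: C2_def)
    with a show False by simp
  qed
  have u14: "k 2 0 0 0 = 0 \<longleftrightarrow> k 0 0 0 2 = 0"
  proof
    assume "k 2 0 0 0 = 0"
    hence "vector [1,0,0,0] \<in> Z" by (simp add: Zdef F2_def)
    hence "sym3 PP (vector [1,0,0,0]) \<in> Z" using inv PP_mem by blast
    hence "vector [0,0,0,(zeta5^4)^3*1] \<in> Z" by (simp only: PP_act)
    thus "k 0 0 0 2 = 0" using zeta5_nz by (simp add: Zdef F2_def)
  next
    assume "k 0 0 0 2 = 0"
    hence "vector [0,0,0,1] \<in> Z" by (simp add: Zdef F2_def)
    hence "sym3 PP (vector [0,0,0,1]) \<in> Z" using inv PP_mem by blast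
    hence "vector [(-zeta5)^3*1,0,0,0] \<in> Z" by (simp only: PP_act)
    thus "k 2 0 0 0 = 0" using zeta5_nz by (simp add: Zdef F2_def)
  qed
  have u23: "k 0 2 0 0 = 0 \<longleftrightarrow> k 0 0 2 0 = 0"
  proof
    assume "k 0 2 0 0 = 0"
    hence "vector [0,1,0,0] \<in> Z" by (simp add: Zdef F2_def)
    hence "sym3 PP (vector [0,1,0,0]) \<in> Z" using inv PP_mem by blast
    hence "vector [0,0,(zeta5^4)^2*(-zeta5)*1,0] \<in> Z" by (simp only: PP_act)
    thus "k 0 0 2 0 = 0" using zeta5_nz by (simp add: Zdef F2_def)
  next
    assume "k 0 0 2 0 = 0"
    hence "vector [0,0,1,0] \<in> Z" by (simp add: Zdef F2_def)
    hence "sym3 PP (vector [0,0,1,0]) \<in> Z" using inv PP_mem by blast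
    hence "vector [0,zeta5^4*(-zeta5)^2*1,0,0] \<in> Z" by (simp only: PP_act)
    thus "k 0 2 0 0 = 0" using zeta5_nz by (simp add: Zdef F2_def)
  qed
  have cc1: "k 2 0 0 0 = 0" using p14 u14 by blast
  have cc2: "k 0 2 0 0 = 0" using p23 u23 by blast
  have cc3: "k 0 0 2 0 = 0" using p23 u23 by blast
  have cc4: "k 0 0 0 2 = 0" using p14 u14 by blast
  note cubes = cc1 cc2 cc3 cc4
  have T1: "\<forall>w<5. C2 k (-(ph^3)) (3*ph^2) (-(3*ph)) 1 w = 0"
  proof -
    have "vector [1,0,0,0] \<in> Z" using cubes by (simp add: Zdef F2_def)
    hence "sym3 bi_T (vector [1,0,0,0]) \<in> Z" using inv T_mem by blast
    hence "\<forall>w<5. C2 k ((sym3 bi_T (vector [1,0,0,0]))$1) ((sym3 bi_T (vector [1,0,0,0]))$2) ((sym3 bi_T (vector [1,0,0,0]))$3) ((sym3 bi_T (vector [1,0,0,0]))$4) w = 0"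
      by (rule W)
    hence "\<forall>w<5. (qq^3)^2 * C2 k (-(ph^3)) (3*ph^2) (-(3*ph)) 1 w = 0" by (simp only: T_act vector_4 C2_hom)
    thus "\<forall>w<5. C2 k (-(ph^3)) (3*ph^2) (-(3*ph)) 1 w = 0" using qq_nz by simp
  qed
  have T2: "\<forall>w<5. C2 k (ph^2) (ph^3-2*ph) (1-2*ph^2) ph w = 0"
  proof -
    have "vector [0,1,0,0] \<in> Z" using cubes by (simp add: Zdef F2_def)
    hence "sym3 bi_T (vector [0,1,0,0]) \<in> Z" using inv T_mem by blast
    hence "\<forall>w<5. C2 k ((sym3 bi_T (vector [0,1,0,0]))$1) ((sym3 bi_T (vector [0,1,0,0]))$2) ((sym3 bi_T (vector [0,1,0,0]))$3) ((sym3 bi_T (vector [0,1,0,0]))$4) w = 0"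
      by (rule W)
    hence "\<forall>w<5. (qq^3)^2 * C2 k (ph^2) (ph^3-2*ph) (1-2*ph^2) ph w = 0" by (simp only: T_act vector_4 C2_hom)
    thus "\<forall>w<5. C2 k (ph^2) (ph^3-2*ph) (1-2*ph^2) ph w = 0" using qq_nz by simp
  qed
  have T3: "\<forall>w<5. C2 k (-ph) (1-2*ph^2) (2*ph-ph^3) (ph^2) w = 0"
  proof -
    have "vector [0,0,1,0] \<in> Z" using cubes by (simp add: Zdef F2_def)
    hence "sym3 bi_T (vector [0,0,1,0]) \<in> Z" using inv T_mem by blast
    hence "\<forall>w<5. C2 k ((sym3 bi_T (vector [0,0,1,0]))$1) ((sym3 bi_T (vector [0,0,1,0]))$2) ((sym3 bi_T (vector [0,0,1,0]))$3) ((sym3 bi_T (vector [0,0,1,0]))$4) w = 0"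
      by (rule W)
    hence "\<forall>w<5. (qq^3)^2 * C2 k (-ph) (1-2*ph^2) (2*ph-ph^3) (ph^2) w = 0" by (simp only: T_act vector_4 C2_hom)
    thus "\<forall>w<5. C2 k (-ph) (1-2*ph^2) (2*ph-ph^3) (ph^2) w = 0" using qq_nz by simp
  qed
  have T4: "\<forall>w<5. C2 k 1 (3*ph) (3*ph^2) (ph^3) w = 0"
  proof -
    have "vector [0,0,0,1] \<in> Z" using cubes by (simp add: Zdef F2_def)
    hence "sym3 bi_T (vector [0,0,0,1]) \<in> Z" using inv T_mem by blast
    hence "\<forall>w<5. C2 k ((sym3 bi_T (vector [0,0,0,1]))$1) ((sym3 bi_T (vector [0,0,0,1]))$2) ((sym3 bi_T (vector [0,0,0,1]))$3) ((sym3 bi_T (vector [0,0,0,1]))$4) w = 0"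
      by (rule W)
    hence "\<forall>w<5. (qq^3)^2 * C2 k 1 (3*ph) (3*ph^2) (ph^3) w = 0" by (simp only: T_act vector_4 C2_hom)
    thus "\<forall>w<5. C2 k 1 (3*ph) (3*ph^2) (ph^3) w = 0" using qq_nz by simp
  qed
  have ks_cl2_1001: "k 1 0 0 1 = 0" by (rule cl2_1001[OF ph_sq]) (simp_all add: T1 T2 T3 T4 cubes)
  have ks_cl2_0110: "k 0 1 1 0 = 0" by (rule cl2_0110[OF ph_sq]) (simp_all add: T1 T2 T3 T4 cubes)
  have ks_cl2_1010: "k 1 0 1 0 = 0" by (rule cl2_1010[OF ph_sq]) (simp_all add: T1 T2 T3 T4 cubes)
  have ks_cl2_1100: "k 1 1 0 0 = 0" by (rule cl2_1100[OF ph_sq]) (simp_all add: T1 T2 T3 T4 cubes)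
  have ks_cl2_0011: "k 0 0 1 1 = 0" by (rule cl2_0011[OF ph_sq]) (simp_all add: T1 T2 T3 T4 cubes)
  have ks_cl2_0101: "k 0 1 0 1 = 0" by (rule cl2_0101[OF ph_sq]) (simp_all add: T1 T2 T3 T4 cubes)
  show ?thesis unfolding F2_def using cubes ks_cl2_1001 ks_cl2_0110 ks_cl2_1010 ks_cl2_1100 ks_cl2_0011 ks_cl2_0101 by simp
qed

definition F3 :: "(nat \<Rightarrow> nat \<Rightarrow> nat \<Rightarrow> nat \<Rightarrow> complex) \<Rightarrow> complex \<Rightarrow> complex \<Rightarrow> complex \<Rightarrow> complex \<Rightarrow> complex" where
  "F3 k y1 y2 y3 y4 = k 3 0 0 0 * y1^3 + k 2 1 0 0 * y1^2*y2 + k 2 0 1 0 * y1^2*y3 + k 2 0 0 1 * y1^2*y4 + k 1 2 0 0 * y1*y2^2 + k 1 1 1 0 * y1*y2*y3 + k 1 1 0 1 * y1*y2*y4 + k 1 0 2 0 * y1*y3^2 + k 1 0 1 1 * y1*y3*y4 + k 1 0 0 2 * y1*y4^2 + k 0 3 0 0 * y2^3 + k 0 2 1 0 * y2^2*y3 + k 0 2 0 1 * y2^2*y4 + k 0 1 2 0 * y2*y3^2 + k 0 1 1 1 * y2*y3*y4 + k 0 1 0 2 * y2*y4^2 + k 0 0 3 0 * y3^3 + k 0 0 2 1 * y3^2*y4 + k 0 0 1 2 * y3*y4^2 + k 0 0 0 3 * y4^3"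

definition C3 :: "(nat \<Rightarrow> nat \<Rightarrow> nat \<Rightarrow> nat \<Rightarrow> complex) \<Rightarrow> complex \<Rightarrow> complex \<Rightarrow> complex \<Rightarrow> complex \<Rightarrow> nat \<Rightarrow> complex" where
  "C3 k y1 y2 y3 y4 w = (if w = 0 then k 2 0 1 0 * y1^2*y3 + k 1 2 0 0 * y1*y2^2 + k 0 1 0 2 * y2*y4^2 + k 0 0 2 1 * y3^2*y4 else (if w = 1 then k 2 1 0 0 * y1^2*y2 + k 1 0 0 2 * y1*y4^2 + k 0 1 1 1 * y2*y3*y4 + k 0 0 3 0 * y3^3 else (if w = 2 then k 3 0 0 0 * y1^3 + k 1 0 1 1 * y1*y3*y4 + k 0 2 0 1 * y2^2*y4 + k 0 1 2 0 * y2*y3^2 else (if w = 3 then k 1 1 0 1 * y1*y2*y4 + k 1 0 2 0 * y1*y3^2 + k 0 2 1 0 * y2^2*y3 + k 0 0 0 3 * y4^3 else (k 2 0 0 1 * y1^2*y4 + k 1 1 1 0 * y1*y2*y3 + k 0 3 0 0 * y2^3 + k 0 0 1 2 * y3*y4^2)))))"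

lemma F3_expand: "(\<Sum>\<alpha>\<in>monomial_exps 3. c \<alpha> * (\<Prod>i\<in>UNIV. x$i ^ \<alpha> i)) = F3 (\<lambda>a b cc e. c (E4 (a,b,cc,e))) (x$1) (x$2) (x$3) (x$4)"
  unfolding mono_sum2 F3_def prod_4 by (simp add: eval_nat_numeral)

lemma F3_FC: "z^5 = 1 \<Longrightarrow> F3 k (z^4*y1) (z^3*y2) (z^2*y3) (z*y4) =
     C3 k y1 y2 y3 y4 0 + z * C3 k y1 y2 y3 y4 1 + z^2 * C3 k y1 y2 y3 y4 2 + z^3 * C3 k y1 y2 y3 y4 3 + z^4 * C3 k y1 y2 y3 y4 4"
  unfolding F3_def C3_def by (simp; algebra?)

lemma C3_hom: "C3 k (s*y1) (s*y2) (s*y3) (s*y4) w = s^3 * C3 k y1 y2 y3 y4 w"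
  unfolding C3_def by (simp add: algebra_simps power_mult_distrib power2_eq_square power3_eq_cube)

lemma cl3_2010: "ph^2 = ph + 1 \<Longrightarrow> C3 k (-(ph^3)) (3*ph^2) (-(3*ph)) 1 0 = 0 \<Longrightarrow> C3 k (ph^2) (ph^3-2*ph) (1-2*ph^2) ph 0 = 0 \<Longrightarrow> C3 k (-ph) (1-2*ph^2) (2*ph-ph^3) (ph^2) 0 = 0 \<Longrightarrow> C3 k 1 (3*ph) (3*ph^2) (ph^3) 0 = 0 \<Longrightarrow> k 2 0 1 0 = 0"
  unfolding C3_def by simp algebra

lemma cl3_1200: "ph^2 = ph + 1 \<Longrightarrow> C3 k (-(ph^3)) (3*ph^2) (-(3*ph)) 1 0 = 0 \<Longrightarrow> C3 k (ph^2) (ph^3-2*ph) (1-2*ph^2) ph 0 = 0 \<Longrightarrow> C3 k (-ph) (1-2*ph^2) (2*ph-ph^3) (ph^2) 0 = 0 \<Longrightarrow> C3 k 1 (3*ph) (3*ph^2) (ph^3) 0 = 0 \<Longrightarrow> k 1 2 0 0 = 0"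
  unfolding C3_def by simp algebra

lemma cl3_0102: "ph^2 = ph + 1 \<Longrightarrow> C3 k (-(ph^3)) (3*ph^2) (-(3*ph)) 1 0 = 0 \<Longrightarrow> C3 k (ph^2) (ph^3-2*ph) (1-2*ph^2) ph 0 = 0 \<Longrightarrow> C3 k (-ph) (1-2*ph^2) (2*ph-ph^3) (ph^2) 0 = 0 \<Longrightarrow> C3 k 1 (3*ph) (3*ph^2) (ph^3) 0 = 0 \<Longrightarrow> k 0 1 0 2 = 0"
  unfolding C3_def by simp algebra

lemma cl3_0021: "ph^2 = ph + 1 \<Longrightarrow> C3 k (-(ph^3)) (3*ph^2) (-(3*ph)) 1 0 = 0 \<Longrightarrow> C3 k (ph^2) (ph^3-2*ph) (1-2*ph^2) ph 0 = 0 \<Longrightarrow> C3 k (-ph) (1-2*ph^2) (2*ph-ph^3) (ph^2) 0 = 0 \<Longrightarrow> C3 k 1 (3*ph) (3*ph^2) (ph^3) 0 = 0 \<Longrightarrow> k 0 0 2 1 = 0"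
  unfolding C3_def by simp algebra

lemma cl3_2100: "ph^2 = ph + 1 \<Longrightarrow> C3 k (-(ph^3)) (3*ph^2) (-(3*ph)) 1 1 = 0 \<Longrightarrow> C3 k (ph^2) (ph^3-2*ph) (1-2*ph^2) ph 1 = 0 \<Longrightarrow> C3 k (-ph) (1-2*ph^2) (2*ph-ph^3) (ph^2) 1 = 0 \<Longrightarrow> C3 k 1 (3*ph) (3*ph^2) (ph^3) 1 = 0 \<Longrightarrow> k 0 0 3 0 = 0 \<Longrightarrow> k 2 1 0 0 = 0"
  unfolding C3_def by simp algebra

lemma cl3_1002: "ph^2 = ph + 1 \<Longrightarrow> C3 k (-(ph^3)) (3*ph^2) (-(3*ph)) 1 1 = 0 \<Longrightarrow> C3 k (ph^2) (ph^3-2*ph) (1-2*ph^2) ph 1 = 0 \<Longrightarrow> C3 k (-ph) (1-2*ph^2) (2*ph-ph^3) (ph^2) 1 = 0 \<Longrightarrow> C3 k 1 (3*ph) (3*ph^2) (ph^3) 1 = 0 \<Longrightarrow> k 0 0 3 0 = 0 \<Longrightarrow> k 1 0 0 2 = 0"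
  unfolding C3_def by simp algebra

lemma cl3_0111: "ph^2 = ph + 1 \<Longrightarrow> C3 k (-(ph^3)) (3*ph^2) (-(3*ph)) 1 1 = 0 \<Longrightarrow> C3 k (ph^2) (ph^3-2*ph) (1-2*ph^2) ph 1 = 0 \<Longrightarrow> C3 k (-ph) (1-2*ph^2) (2*ph-ph^3) (ph^2) 1 = 0 \<Longrightarrow> C3 k 1 (3*ph) (3*ph^2) (ph^3) 1 = 0 \<Longrightarrow> k 0 0 3 0 = 0 \<Longrightarrow> k 0 1 1 1 = 0"
  unfolding C3_def by simp algebra

lemma cl3_1011: "ph^2 = ph + 1 \<Longrightarrow> C3 k (-(ph^3)) (3*ph^2) (-(3*ph)) 1 2 = 0 \<Longrightarrow> C3 k (ph^2) (ph^3-2*ph) (1-2*ph^2) ph 2 = 0 \<Longrightarrow> C3 k (-ph) (1-2*ph^2) (2*ph-ph^3) (ph^2) 2 = 0 \<Longrightarrow> C3 k 1 (3*ph) (3*ph^2) (ph^3) 2 = 0 \<Longrightarrow> k 3 0 0 0 = 0 \<Longrightarrow> k 1 0 1 1 = 0"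
  unfolding C3_def by simp algebra

lemma cl3_0201: "ph^2 = ph + 1 \<Longrightarrow> C3 k (-(ph^3)) (3*ph^2) (-(3*ph)) 1 2 = 0 \<Longrightarrow> C3 k (ph^2) (ph^3-2*ph) (1-2*ph^2) ph 2 = 0 \<Longrightarrow> C3 k (-ph) (1-2*ph^2) (2*ph-ph^3) (ph^2) 2 = 0 \<Longrightarrow> C3 k 1 (3*ph) (3*ph^2) (ph^3) 2 = 0 \<Longrightarrow> k 3 0 0 0 = 0 \<Longrightarrow> k 0 2 0 1 = 0"
  unfolding C3_def by simp algebra

lemma cl3_0120: "ph^2 = ph + 1 \<Longrightarrow> C3 k (-(ph^3)) (3*ph^2) (-(3*ph)) 1 2 = 0 \<Longrightarrow> C3 k (ph^2) (ph^3-2*ph) (1-2*ph^2) ph 2 = 0 \<Longrightarrow> C3 k (-ph) (1-2*ph^2) (2*ph-ph^3) (ph^2) 2 = 0 \<Longrightarrow> C3 k 1 (3*ph) (3*ph^2) (ph^3) 2 = 0 \<Longrightarrow> k 3 0 0 0 = 0 \<Longrightarrow> k 0 1 2 0 = 0"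
  unfolding C3_def by simp algebra

lemma cl3_1101: "ph^2 = ph + 1 \<Longrightarrow> C3 k (-(ph^3)) (3*ph^2) (-(3*ph)) 1 3 = 0 \<Longrightarrow> C3 k (ph^2) (ph^3-2*ph) (1-2*ph^2) ph 3 = 0 \<Longrightarrow> C3 k (-ph) (1-2*ph^2) (2*ph-ph^3) (ph^2) 3 = 0 \<Longrightarrow> C3 k 1 (3*ph) (3*ph^2) (ph^3) 3 = 0 \<Longrightarrow> k 0 0 0 3 = 0 \<Longrightarrow> k 1 1 0 1 = 0"
  unfolding C3_def by simp algebra

lemma cl3_1020: "ph^2 = ph + 1 \<Longrightarrow> C3 k (-(ph^3)) (3*ph^2) (-(3*ph)) 1 3 = 0 \<Longrightarrow> C3 k (ph^2) (ph^3-2*ph) (1-2*ph^2) ph 3 = 0 \<Longrightarrow> C3 k (-ph) (1-2*ph^2) (2*ph-ph^3) (ph^2) 3 = 0 \<Longrightarrow> C3 k 1 (3*ph) (3*ph^2) (ph^3) 3 = 0 \<Longrightarrow> k 0 0 0 3 = 0 \<Longrightarrow> k 1 0 2 0 = 0"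
  unfolding C3_def by simp algebra

lemma cl3_0210: "ph^2 = ph + 1 \<Longrightarrow> C3 k (-(ph^3)) (3*ph^2) (-(3*ph)) 1 3 = 0 \<Longrightarrow> C3 k (ph^2) (ph^3-2*ph) (1-2*ph^2) ph 3 = 0 \<Longrightarrow> C3 k (-ph) (1-2*ph^2) (2*ph-ph^3) (ph^2) 3 = 0 \<Longrightarrow> C3 k 1 (3*ph) (3*ph^2) (ph^3) 3 = 0 \<Longrightarrow> k 0 0 0 3 = 0 \<Longrightarrow> k 0 2 1 0 = 0"
  unfolding C3_def by simp algebra

lemma cl3_2001: "ph^2 = ph + 1 \<Longrightarrow> C3 k (-(ph^3)) (3*ph^2) (-(3*ph)) 1 4 = 0 \<Longrightarrow> C3 k (ph^2) (ph^3-2*ph) (1-2*ph^2) ph 4 = 0 \<Longrightarrow> C3 k (-ph) (1-2*ph^2) (2*ph-ph^3) (ph^2) 4 = 0 \<Longrightarrow> C3 k 1 (3*ph) (3*ph^2) (ph^3) 4 = 0 \<Longrightarrow> k 0 3 0 0 = 0 \<Longrightarrow> k 2 0 0 1 = 0"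
  unfolding C3_def by simp algebra

lemma cl3_1110: "ph^2 = ph + 1 \<Longrightarrow> C3 k (-(ph^3)) (3*ph^2) (-(3*ph)) 1 4 = 0 \<Longrightarrow> C3 k (ph^2) (ph^3-2*ph) (1-2*ph^2) ph 4 = 0 \<Longrightarrow> C3 k (-ph) (1-2*ph^2) (2*ph-ph^3) (ph^2) 4 = 0 \<Longrightarrow> C3 k 1 (3*ph) (3*ph^2) (ph^3) 4 = 0 \<Longrightarrow> k 0 3 0 0 = 0 \<Longrightarrow> k 1 1 1 0 = 0"
  unfolding C3_def by simp algebra

lemma cl3_0012: "ph^2 = ph + 1 \<Longrightarrow> C3 k (-(ph^3)) (3*ph^2) (-(3*ph)) 1 4 = 0 \<Longrightarrow> C3 k (ph^2) (ph^3-2*ph) (1-2*ph^2) ph 4 = 0 \<Longrightarrow> C3 k (-ph) (1-2*ph^2) (2*ph-ph^3) (ph^2) 4 = 0 \<Longrightarrow> C3 k 1 (3*ph) (3*ph^2) (ph^3) 4 = 0 \<Longrightarrow> k 0 3 0 0 = 0 \<Longrightarrow> k 0 0 1 2 = 0"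
  unfolding C3_def by simp algebra

lemma main3:
  assumes Zdef: "\<And>x. x \<in> Z \<longleftrightarrow> F3 k (x$1) (x$2) (x$3) (x$4) = 0"
  and inv: "\<And>g x. g \<in> binary_icosahedral \<Longrightarrow> x \<in> Z \<Longrightarrow> sym3 g x \<in> Z"
  shows "F3 k y1 y2 y3 y4 = 0"
proof -
  have invS: "\<And>x. x \<in> Z \<Longrightarrow> sym3 bi_S x \<in> Z" using inv S_mem by blast
  have W: "\<And>y. y \<in> Z \<Longrightarrow> \<forall>w<5. C3 k (y$1) (y$2) (y$3) (y$4) w = 0"
  proof -
    fix y assume "y \<in> Z"
    from factW[where C="C3 k", OF Zdef invS F3_FC this]
    show "\<forall>w<5. C3 k (y$1) (y$2) (y$3) (y$4) w = 0" by (auto simp: less_Suc_eq numeral_eq_Suc)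
  qed
  have p14: "k 3 0 0 0 = 0 \<or> k 0 0 0 3 = 0"
  proof (rule ccontr)
    assume "\<not> (k 3 0 0 0 = 0 \<or> k 0 0 0 3 = 0)"
    hence a: "k 3 0 0 0 \<noteq> 0" "k 0 0 0 3 \<noteq> 0" by auto
    obtain t where t: "k 3 0 0 0 + k 2 0 0 1*t + k 1 0 0 2*t^2 + k 0 0 0 3*t^3 = 0" using root3[OF a(2)] by blast
    have "vector [1,0,0,t] \<in> Z" using t by (simp add: Zdef F3_def algebra_simps)
    from W[OF this] have "C3 k 1 0 0 t 2 = 0" by simp
    hence "k 3 0 0 0 = 0" by (simp add: C3_def)
    with a show False by simp
  qed
  have p23: "k 0 3 0 0 = 0 \<or> k 0 0 3 0 = 0"
  proof (rule ccontr)
    assume "\<not> (k 0 3 0 0 = 0 \<or> k 0 0 3 0 = 0)"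
    hence a: "k 0 3 0 0 \<noteq> 0" "k 0 0 3 0 \<noteq> 0" by auto
    obtain t where t: "k 0 3 0 0 + k 0 2 1 0*t + k 0 1 2 0*t^2 + k 0 0 3 0*t^3 = 0" using root3[OF a(2)] by blast
    have "vector [0,1,t,0] \<in> Z" using t by (simp add: Zdef F3_def algebra_simps)
    from W[OF this] have "C3 k 0 1 t 0 4 = 0" by simp
    hence "k 0 3 0 0 = 0" by (simp add: C3_def)
    with a show False by simp
  qed
  have u14: "k 3 0 0 0 = 0 \<longleftrightarrow> k 0 0 0 3 = 0"
  proof
    assume "k 3 0 0 0 = 0"
    hence "vector [1,0,0,0] \<in> Z" by (simp add: Zdef F3_def)
    hence "sym3 PP (vector [1,0,0,0]) \<in> Z" using inv PP_mem by blast
    hence "vector [0,0,0,(zeta5^4)^3*1] \<in> Z" by (simp only: PP_act)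
    thus "k 0 0 0 3 = 0" using zeta5_nz by (simp add: Zdef F3_def)
  next
    assume "k 0 0 0 3 = 0"
    hence "vector [0,0,0,1] \<in> Z" by (simp add: Zdef F3_def)
    hence "sym3 PP (vector [0,0,0,1]) \<in> Z" using inv PP_mem by blast
    hence "vector [(-zeta5)^3*1,0,0,0] \<in> Z" by (simp only: PP_act)
    thus "k 3 0 0 0 = 0" using zeta5_nz by (simp add: Zdef F3_def)
  qed
  have u23: "k 0 3 0 0 = 0 \<longleftrightarrow> k 0 0 3 0 = 0"
  proof
    assume "k 0 3 0 0 = 0"
    hence "vector [0,1,0,0] \<in> Z" by (simp add: Zdef F3_def)
    hence "sym3 PP (vector [0,1,0,0]) \<in> Z" using inv PP_mem by blast
    hence "vector [0,0,(zeta5^4)^2*(-zeta5)*1,0] \<in> Z" by (simp only: PP_act)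
    thus "k 0 0 3 0 = 0" using zeta5_nz by (simp add: Zdef F3_def)
  next
    assume "k 0 0 3 0 = 0"
    hence "vector [0,0,1,0] \<in> Z" by (simp add: Zdef F3_def)
    hence "sym3 PP (vector [0,0,1,0]) \<in> Z" using inv PP_mem by blast
    hence "vector [0,zeta5^4*(-zeta5)^2*1,0,0] \<in> Z" by (simp only: PP_act)
    thus "k 0 3 0 0 = 0" using zeta5_nz by (simp add: Zdef F3_def)
  qed
  have cc1: "k 3 0 0 0 = 0" using p14 u14 by blast
  have cc2: "k 0 3 0 0 = 0" using p23 u23 by blast
  have cc3: "k 0 0 3 0 = 0" using p23 u23 by blast
  have cc4: "k 0 0 0 3 = 0" using p14 u14 by blast
  note cubes = cc1 cc2 cc3 cc4
  have T1: "\<forall>w<5. C3 k (-(ph^3)) (3*ph^2) (-(3*ph)) 1 w = 0"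
  proof -
    have "vector [1,0,0,0] \<in> Z" using cubes by (simp add: Zdef F3_def)
    hence "sym3 bi_T (vector [1,0,0,0]) \<in> Z" using inv T_mem by blast
    hence "\<forall>w<5. C3 k ((sym3 bi_T (vector [1,0,0,0]))$1) ((sym3 bi_T (vector [1,0,0,0]))$2) ((sym3 bi_T (vector [1,0,0,0]))$3) ((sym3 bi_T (vector [1,0,0,0]))$4) w = 0"
      by (rule W)
    hence "\<forall>w<5. (qq^3)^3 * C3 k (-(ph^3)) (3*ph^2) (-(3*ph)) 1 w = 0" by (simp only: T_act vector_4 C3_hom)
    thus "\<forall>w<5. C3 k (-(ph^3)) (3*ph^2) (-(3*ph)) 1 w = 0" using qq_nz by simp
  qed
  have T2: "\<forall>w<5. C3 k (ph^2) (ph^3-2*ph) (1-2*ph^2) ph w = 0"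
  proof -
    have "vector [0,1,0,0] \<in> Z" using cubes by (simp add: Zdef F3_def)
    hence "sym3 bi_T (vector [0,1,0,0]) \<in> Z" using inv T_mem by blast
    hence "\<forall>w<5. C3 k ((sym3 bi_T (vector [0,1,0,0]))$1) ((sym3 bi_T (vector [0,1,0,0]))$2) ((sym3 bi_T (vector [0,1,0,0]))$3) ((sym3 bi_T (vector [0,1,0,0]))$4) w = 0"
      by (rule W)
    hence "\<forall>w<5. (qq^3)^3 * C3 k (ph^2) (ph^3-2*ph) (1-2*ph^2) ph w = 0" by (simp only: T_act vector_4 C3_hom)
    thus "\<forall>w<5. C3 k (ph^2) (ph^3-2*ph) (1-2*ph^2) ph w = 0" using qq_nz by simp
  qed
  have T3: "\<forall>w<5. C3 k (-ph) (1-2*ph^2) (2*ph-ph^3) (ph^2) w = 0"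
  proof -
    have "vector [0,0,1,0] \<in> Z" using cubes by (simp add: Zdef F3_def)
    hence "sym3 bi_T (vector [0,0,1,0]) \<in> Z" using inv T_mem by blast
    hence "\<forall>w<5. C3 k ((sym3 bi_T (vector [0,0,1,0]))$1) ((sym3 bi_T (vector [0,0,1,0]))$2) ((sym3 bi_T (vector [0,0,1,0]))$3) ((sym3 bi_T (vector [0,0,1,0]))$4) w = 0"
      by (rule W)
    hence "\<forall>w<5. (qq^3)^3 * C3 k (-ph) (1-2*ph^2) (2*ph-ph^3) (ph^2) w = 0" by (simp only: T_act vector_4 C3_hom)
    thus "\<forall>w<5. C3 k (-ph) (1-2*ph^2) (2*ph-ph^3) (ph^2) w = 0" using qq_nz by simp
  qed
  have T4: "\<forall>w<5. C3 k 1 (3*ph) (3*ph^2) (ph^3) w = 0"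
  proof -
    have "vector [0,0,0,1] \<in> Z" using cubes by (simp add: Zdef F3_def)
    hence "sym3 bi_T (vector [0,0,0,1]) \<in> Z" using inv T_mem by blast
    hence "\<forall>w<5. C3 k ((sym3 bi_T (vector [0,0,0,1]))$1) ((sym3 bi_T (vector [0,0,0,1]))$2) ((sym3 bi_T (vector [0,0,0,1]))$3) ((sym3 bi_T (vector [0,0,0,1]))$4) w = 0"
      by (rule W)
    hence "\<forall>w<5. (qq^3)^3 * C3 k 1 (3*ph) (3*ph^2) (ph^3) w = 0" by (simp only: T_act vector_4 C3_hom)
    thus "\<forall>w<5. C3 k 1 (3*ph) (3*ph^2) (ph^3) w = 0" using qq_nz by simp
  qed
  have ks_cl3_2010: "k 2 0 1 0 = 0" by (rule cl3_2010[OF ph_sq]) (simp_all add: T1 T2 T3 T4 cubes)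
  have ks_cl3_1200: "k 1 2 0 0 = 0" by (rule cl3_1200[OF ph_sq]) (simp_all add: T1 T2 T3 T4 cubes)
  have ks_cl3_0102: "k 0 1 0 2 = 0" by (rule cl3_0102[OF ph_sq]) (simp_all add: T1 T2 T3 T4 cubes)
  have ks_cl3_0021: "k 0 0 2 1 = 0" by (rule cl3_0021[OF ph_sq]) (simp_all add: T1 T2 T3 T4 cubes)
  have ks_cl3_2100: "k 2 1 0 0 = 0" by (rule cl3_2100[OF ph_sq]) (simp_all add: T1 T2 T3 T4 cubes)
  have ks_cl3_1002: "k 1 0 0 2 = 0" by (rule cl3_1002[OF ph_sq]) (simp_all add: T1 T2 T3 T4 cubes)
  have ks_cl3_0111: "k 0 1 1 1 = 0" by (rule cl3_0111[OF ph_sq]) (simp_all add: T1 T2 T3 T4 cubes)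
  have ks_cl3_1011: "k 1 0 1 1 = 0" by (rule cl3_1011[OF ph_sq]) (simp_all add: T1 T2 T3 T4 cubes)
  have ks_cl3_0201: "k 0 2 0 1 = 0" by (rule cl3_0201[OF ph_sq]) (simp_all add: T1 T2 T3 T4 cubes)
  have ks_cl3_0120: "k 0 1 2 0 = 0" by (rule cl3_0120[OF ph_sq]) (simp_all add: T1 T2 T3 T4 cubes)
  have ks_cl3_1101: "k 1 1 0 1 = 0" by (rule cl3_1101[OF ph_sq]) (simp_all add: T1 T2 T3 T4 cubes)
  have ks_cl3_1020: "k 1 0 2 0 = 0" by (rule cl3_1020[OF ph_sq]) (simp_all add: T1 T2 T3 T4 cubes)
  have ks_cl3_0210: "k 0 2 1 0 = 0" by (rule cl3_0210[OF ph_sq]) (simp_all add: T1 T2 T3 T4 cubes)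
  have ks_cl3_2001: "k 2 0 0 1 = 0" by (rule cl3_2001[OF ph_sq]) (simp_all add: T1 T2 T3 T4 cubes)
  have ks_cl3_1110: "k 1 1 1 0 = 0" by (rule cl3_1110[OF ph_sq]) (simp_all add: T1 T2 T3 T4 cubes)
  have ks_cl3_0012: "k 0 0 1 2 = 0" by (rule cl3_0012[OF ph_sq]) (simp_all add: T1 T2 T3 T4 cubes)
  show ?thesis unfolding F3_def using cubes ks_cl3_2010 ks_cl3_1200 ks_cl3_0102 ks_cl3_0021 ks_cl3_2100 ks_cl3_1002 ks_cl3_0111 ks_cl3_1011 ks_cl3_0201 ks_cl3_0120 ks_cl3_1101 ks_cl3_1020 ks_cl3_0210 ks_cl3_2001 ks_cl3_1110 ks_cl3_0012 by simp
qed

theorem lemma3p3: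
  shows "\<not> (\<exists>d Z. d \<le> 3 \<and> surface_of_degree d Z \<and> A5_invariant Z)"
proof
  assume "\<exists>d Z. d \<le> 3 \<and> surface_of_degree d Z \<and> A5_invariant Z"
  then obtain d Z where d3: "d \<le> 3" and surf: "surface_of_degree d Z" and inv: "A5_invariant Z" by blast
  from surf obtain f where d1: "1 \<le> d" and hp: "homogeneous_poly d f" and fnz: "f \<noteq> (\<lambda>_. 0)"
    and Zd: "Z = {x. f x = 0}" unfolding surface_of_degree_def by blast
  from hp obtain c where fc: "\<And>x. f x = (\<Sum>\<alpha>\<in>monomial_exps d. c \<alpha> * (\<Prod>i\<in>UNIV. (x$i) ^ (\<alpha> i)))"
    unfolding homogeneous_poly_def by blast
  define k where "k = (\<lambda>a b cc e. c (E4 (a,b,cc,e)))"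
  have invZ: "\<And>g x. g \<in> binary_icosahedral \<Longrightarrow> x \<in> Z \<Longrightarrow> sym3 g x \<in> Z"
  proof -
    fix g x assume g: "g \<in> binary_icosahedral" and x: "x \<in> Z"
    have "sym3 g ` Z = Z" using inv g unfolding A5_invariant_def by blast
    thus "sym3 g x \<in> Z" using x by blast
  qed
  from d1 d3 have "d = 1 \<or> d = 2 \<or> d = 3" by auto
  thus False
  proof (elim disjE)
    assume dd: "d = 1"
    have Zdef: "\<And>x. x \<in> Z \<longleftrightarrow> F1 k (x$1) (x$2) (x$3) (x$4) = 0"
      using fc F1_expand unfolding Zd k_def dd by simp
    have "\<And>x. f x = 0" using main1[OF Zdef invZ] fc F1_expand unfolding k_def dd by simp
    with fnz show False by auto
  next
    assume dd: "d = 2"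
    have Zdef: "\<And>x. x \<in> Z \<longleftrightarrow> F2 k (x$1) (x$2) (x$3) (x$4) = 0"
      using fc F2_expand unfolding Zd k_def dd by simp
    have "\<And>x. f x = 0" using main2[OF Zdef invZ] fc F2_expand unfolding k_def dd by simp
    with fnz show False by auto
  next
    assume dd: "d = 3"
    have Zdef: "\<And>x. x \<in> Z \<longleftrightarrow> F3 k (x$1) (x$2) (x$3) (x$4) = 0"
      using fc F3_expand unfolding Zd k_def dd by simp
    have "\<And>x. f x = 0" using main3[OF Zdef invZ] fc F3_expand unfolding k_def dd by simp
    with fnz show False by auto
  qed
qed

end
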